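(* Let $k\ge3$ and let $\sigma,\tau\in\mathfrak S_{k-2}$ be consecutive patterns with $A_\sigma(z)=A_\tau(z)$. Then $A_{1\text{-}\sigma\text{-}k}(z)=A_{1\text{-}\tau\text{-}k}(z)$, where for $\sigma=\sigma_1\cdots\sigma_{k-2}$, $1\text{-}\sigma\text{-}k$ denotes the generalized pattern $1\text{-}(\sigma_1+1)\cdots(\sigma_{k-2}+1)\text{-}k$. In particular $A_{1\text{-}23\text{-}4}(z)=A_{1\text{-}32\text{-}4}(z)$.
   Context: $\mathfrak S_n$ is the symmetric group on $\{1,\dots,n\}$, permutations in one-line notation. A generalized pattern of length $m$ is a permutation $\sigma_1\cdots\sigma_m\in\mathfrak S_m$ with, between each pair of adjacent entries, either a dash "-" or nothing. A permutation $\pi\in\mathfrak S_n$ contains it if there are indices $i_1<\dots<i_m$ with $i_{j+1}=i_j+1$ whenever there is no dash between $\sigma_j$ and $\sigma_{j+1}$, and with $\pi_{i_a}<\pi_{i_b}$ iff $\sigma_a<\sigma_b$ for all $a,b$; otherwise $\pi$ avoids it. A consecutive pattern has no dashes. $\alpha_n(\sigma)$ is the number of permutations in $\mathfrak S_n$ avoiding $\sigma$ ($\alpha_0=1$) and $A_\sigma(z)=\sum_{n\ge0}\alpha_n(\sigma)z^n/n!$. *)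

theory Defs
  imports "HOL-Computational_Algebra.Formal_Power_Series"
begin

definition perms :: "nat \<Rightarrow> nat list set" where
  "perms n = {p. distinct p \<and> set p = {1..n}}"

text \<open>A generalized pattern: a permutation word sigma of length m together with a
  list d of length m-1; d!j = True means there is a dash between sigma!j and sigma!(j+1)
  (0-based positions), False means the two entries must be adjacent.\<close>
type_synonym gpat = "nat list \<times> bool list"

definition contains :: "nat list \<Rightarrow> gpat \<Rightarrow> bool" where
  "contains p pat = (case pat of (sg, d) \<Rightarrow>
     (\<exists>ix::nat \<Rightarrow> nat.
        (\<forall>j<length sg. ix j < length p) \<and>
        (\<forall>j. j + 1 < length sg \<longrightarrow> ix j < ix (j + 1)) \<and>
        (\<forall>j. j + 1 < length sg \<longrightarrow> \<not> d ! j \<longrightarrow> ix (j + 1) = ix j + 1) \<and>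
        (\<forall>a<length sg. \<forall>b<length sg. (p ! ix a < p ! ix b) = (sg ! a < sg ! b))))"

definition avoids :: "nat list \<Rightarrow> gpat \<Rightarrow> bool" where
  "avoids p pat = (\<not> contains p pat)"

definition alpha :: "gpat \<Rightarrow> nat \<Rightarrow> nat" where
  "alpha pat n = (if n = 0 then 1 else card {p \<in> perms n. avoids p pat})"

definition egf :: "gpat \<Rightarrow> real fps" where
  "egf pat = Abs_fps (\<lambda>n. of_nat (alpha pat n) / fact n)"

definition consec :: "nat list \<Rightarrow> gpat" where
  "consec sg = (sg, replicate (length sg - 1) False)"

definition wrap :: "nat list \<Rightarrow> gpat" where
  "wrap sg = (1 # map Suc sg @ [length sg + 2],
              True # replicate (length sg - 1) False @ [True])"

end

theory Submission
  imports Defs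
begin


definition blk :: "nat list \<Rightarrow> nat list \<Rightarrow> nat \<Rightarrow> bool" where
  "blk p sg i \<longleftrightarrow> i + length sg \<le> length p \<and>
     (\<forall>a<length sg. \<forall>b<length sg. (p!(i+a) < p!(i+b)) = (sg!a < sg!b))"

lemma consec_iff:
  assumes "length sg \<ge> 1"
  shows "contains p (consec sg) \<longleftrightarrow> (\<exists>i. blk p sg i)"
proof
  assume "contains p (consec sg)"
  then obtain ix where h1: "\<forall>j<length sg. ix j < length p"
    and h2: "\<forall>j. j + 1 < length sg \<longrightarrow> \<not> replicate (length sg - 1) False ! j \<longrightarrow> ix (j + 1) = ix j + 1"
    and h3: "\<forall>a<length sg. \<forall>b<length sg. (p ! ix a < p ! ix b) = (sg ! a < sg ! b)"
    unfolding contains_def consec_def by auto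
  have ixj: "j < length sg \<Longrightarrow> ix j = ix 0 + j" for j
  proof (induction j)
    case (Suc j) then show ?case using h2 by auto
  qed simp
  have "blk p sg (ix 0)" unfolding blk_def
  proof (intro conjI allI impI)
    have "ix (length sg - 1) < length p" using h1 assms by auto
    then show "ix 0 + length sg \<le> length p" using ixj[of "length sg - 1"] assms by auto
  next
    fix a b assume "a < length sg" "b < length sg"
    then show "(p ! (ix 0 + a) < p ! (ix 0 + b)) = (sg ! a < sg ! b)"
      using h3 ixj by metis
  qed
  then show "\<exists>i. blk p sg i" by blast
next
  assume "\<exists>i. blk p sg i"
  then obtain i where b: "blk p sg i" by blast
  show "contains p (consec sg)" unfolding contains_def consec_def prod.case
    using b unfolding blk_def
    by (intro exI[of _ "\<lambda>j. i + j"]) auto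
qed

lemma contains_map_mono:
  assumes "\<forall>x\<in>set xs. \<forall>y\<in>set xs. (g x < g y) = (x < y)"
  shows "contains (map g xs) pat = contains xs pat"
proof -
  obtain sg d where pat: "pat = (sg, d)" by force
  have key: "(\<forall>j<length sg. ix j < length xs) \<Longrightarrow>
     (\<forall>a<length sg. \<forall>b<length sg. (map g xs ! ix a < map g xs ! ix b) = (sg ! a < sg ! b))
     = (\<forall>a<length sg. \<forall>b<length sg. (xs ! ix a < xs ! ix b) = (sg ! a < sg ! b))" for ix
    using assms by (auto simp: nth_map)
  show ?thesis unfolding pat contains_def prod.case
  proof (rule iffI; elim exE)
    fix ix assume h: "(\<forall>j<length sg. ix j < length (map g xs)) \<and>
         (\<forall>j. j + 1 < length sg \<longrightarrow> ix j < ix (j + 1)) \<and>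
         (\<forall>j. j + 1 < length sg \<longrightarrow> \<not> d ! j \<longrightarrow> ix (j + 1) = ix j + 1) \<and>
         (\<forall>a<length sg. \<forall>b<length sg. (map g xs ! ix a < map g xs ! ix b) = (sg ! a < sg ! b))"
    then show "\<exists>ix. (\<forall>j<length sg. ix j < length xs) \<and>
         (\<forall>j. j + 1 < length sg \<longrightarrow> ix j < ix (j + 1)) \<and>
         (\<forall>j. j + 1 < length sg \<longrightarrow> \<not> d ! j \<longrightarrow> ix (j + 1) = ix j + 1) \<and>
         (\<forall>a<length sg. \<forall>b<length sg. (xs ! ix a < xs ! ix b) = (sg ! a < sg ! b))"
      using key[of ix] by (intro exI[of _ ix]) (simp del: nth_map)
  next
    fix ix assume h: "(\<forall>j<length sg. ix j < length xs) \<and>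
         (\<forall>j. j + 1 < length sg \<longrightarrow> ix j < ix (j + 1)) \<and>
         (\<forall>j. j + 1 < length sg \<longrightarrow> \<not> d ! j \<longrightarrow> ix (j + 1) = ix j + 1) \<and>
         (\<forall>a<length sg. \<forall>b<length sg. (xs ! ix a < xs ! ix b) = (sg ! a < sg ! b))"
    then show "\<exists>ix. (\<forall>j<length sg. ix j < length (map g xs)) \<and>
         (\<forall>j. j + 1 < length sg \<longrightarrow> ix j < ix (j + 1)) \<and>
         (\<forall>j. j + 1 < length sg \<longrightarrow> \<not> d ! j \<longrightarrow> ix (j + 1) = ix j + 1) \<and>
         (\<forall>a<length sg. \<forall>b<length sg. (map g xs ! ix a < map g xs ! ix b) = (sg ! a < sg ! b))"
      using key[of ix] by (intro exI[of _ ix]) (simp del: nth_map)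
  qed
qed

lemma perms_len: "sg \<in> perms m \<Longrightarrow> length sg = m"
  unfolding perms_def using distinct_card by fastforce

lemma perms_nth: "sg \<in> perms m \<Longrightarrow> x < m \<Longrightarrow> sg ! x \<ge> 1 \<and> sg ! x \<le> m"
proof -
  assume a: "sg \<in> perms m" "x < m"
  then have "sg ! x \<in> set sg" using perms_len[OF a(1)] by auto
  then show ?thesis using a(1) unfolding perms_def by auto
qed

lemma wrapW_nth:
  assumes "length sg = m" "j < m + 2"
  shows "(1 # map Suc sg @ [m+2]) ! j = (if j = 0 then 1 else if j \<le> m then Suc (sg ! (j - 1)) else m + 2)"
  using assms by (cases j) (auto simp: nth_append)

lemma wrapD_nth:
  assumes "1 \<le> j" "j < m"
  shows "(True # replicate (m - 1) False @ [True]) ! j = False"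
  using assms by (cases j) (auto simp: nth_append)

lemma wrap_iff:
  assumes sp: "sg \<in> perms m" and m1: "m \<ge> 1"
  shows "contains p (wrap sg) \<longleftrightarrow> (\<exists>a i b. a < i \<and> blk p sg i \<and> i + m \<le> b \<and> b < length p \<and>
      (\<forall>x<m. p!a < p!(i+x)) \<and> (\<forall>x<m. p!(i+x) < p!b))"
proof -
  have len: "length sg = m" using perms_len[OF sp] .
  have sgb: "\<And>x. x < m \<Longrightarrow> sg ! x \<ge> 1 \<and> sg ! x \<le> m" using perms_nth[OF sp] .
  define W where "W = 1 # map Suc sg @ [m+2]"
  define D where "D = True # replicate (m - 1) False @ [True]"
  have wr: "wrap sg = (W, D)" unfolding wrap_def W_def D_def len by simp
  have lW: "length W = m + 2" unfolding W_def using len by simp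
  have Wn: "\<And>j. j < m + 2 \<Longrightarrow> W ! j = (if j = 0 then 1 else if j \<le> m then Suc (sg ! (j - 1)) else m + 2)"
    unfolding W_def using wrapW_nth[OF len] by blast
  have Dn: "\<And>j. 1 \<le> j \<Longrightarrow> j < m \<Longrightarrow> D ! j = False" unfolding D_def using wrapD_nth by blast
  show ?thesis
  proof
    assume "contains p (wrap sg)"
    then obtain ix where h1: "\<forall>j<m+2. ix j < length p"
      and h2: "\<forall>j. j + 1 < m+2 \<longrightarrow> ix j < ix (j + 1)"
      and h2': "\<forall>j. j + 1 < m+2 \<longrightarrow> \<not> D ! j \<longrightarrow> ix (j + 1) = ix j + 1"
      and h3: "\<forall>a<m+2. \<forall>b<m+2. (p ! ix a < p ! ix b) = (W ! a < W ! b)"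
      unfolding contains_def wr prod.case lW by blast
    define i0 where "i0 = ix 1"
    have ixj0: "j < m \<Longrightarrow> ix (Suc j) = i0 + j" for j
    proof (induction j)
      case (Suc j) then show ?case using h2'[rule_format, of "Suc j"] Dn[of "Suc j"] by auto
    qed (simp add: i0_def)
    have ixj: "j < m \<Longrightarrow> ix (Suc j) = ix 1 + j" for j by (rule ixj0[unfolded i0_def])
    have "ix m < length p" using h1 by auto
    then have A: "ix 1 + m \<le> length p" using ixj0[of "m - 1"] m1 i0_def by auto
    have B: "(p!(ix 1 + x) < p!(ix 1 + y)) = (sg!x < sg!y)" if "x < m" "y < m" for x y
      using h3[rule_format, of "Suc x" "Suc y"] that ixj[of x] ixj[of y] Wn[of "Suc x"] Wn[of "Suc y"] by auto
    have C: "p!(ix 0) < p!(ix 1 + x)" if "x < m" for x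
      using h3[rule_format, of 0 "Suc x"] that ixj[of x] sgb[of x] Wn[of 0] Wn[of "Suc x"] by auto
    have E: "p!(ix 1 + x) < p!(ix (m+1))" if "x < m" for x
      using h3[rule_format, of "Suc x" "m+1"] that ixj[of x] Wn[of "m+1"] Wn[of "Suc x"] sgb[of x] by auto
    have F: "ix 0 < ix 1" using h2 by auto
    have G: "ix 1 + m \<le> ix (m+1)" using h2[rule_format, of m] ixj0[of "m - 1"] m1 i0_def by auto
    have H: "ix (m+1) < length p" using h1 by auto
    show "\<exists>a i b. a < i \<and> blk p sg i \<and> i + m \<le> b \<and> b < length p \<and>
      (\<forall>x<m. p!a < p!(i+x)) \<and> (\<forall>x<m. p!(i+x) < p!b)"
    proof (intro exI conjI)
      show "blk p sg (ix 1)" unfolding blk_def len using A B by blast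
    qed (use C E F G H in blast)+
  next
    assume "\<exists>a i b. a < i \<and> blk p sg i \<and> i + m \<le> b \<and> b < length p \<and>
      (\<forall>x<m. p!a < p!(i+x)) \<and> (\<forall>x<m. p!(i+x) < p!b)"
    then obtain a i b where ai: "a < i" and bl: "blk p sg i" and ib: "i + m \<le> b" and bn: "b < length p"
      and pa: "\<forall>x<m. p!a < p!(i+x)" and pb: "\<forall>x<m. p!(i+x) < p!b" by blast
    have bl2: "\<And>x y. x < m \<Longrightarrow> y < m \<Longrightarrow> (p!(i+x) < p!(i+y)) = (sg!x < sg!y)"
      using bl unfolding blk_def len by auto
    have pab: "p!a < p!b" using pa[rule_format, of 0] pb[rule_format, of 0] m1 by simp
    define ix where "ix j = (if j = 0 then a else if j \<le> m then i + (j - 1) else b)" for j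
    have ixa: "ix 0 = a" and ixb: "ix (Suc m) = b" unfolding ix_def by auto
    have ixm: "\<And>j. 1 \<le> j \<Longrightarrow> j \<le> m \<Longrightarrow> ix j = i + (j - 1)" unfolding ix_def by auto
    have W0: "W ! 0 = 1" using Wn by simp
    have Wl: "W ! (Suc m) = m + 2" using Wn by simp
    have Wm: "\<And>j. 1 \<le> j \<Longrightarrow> j \<le> m \<Longrightarrow> W ! j = Suc (sg ! (j - 1))" using Wn by simp
    have sgb': "\<And>j. 1 \<le> j \<Longrightarrow> j \<le> m \<Longrightarrow> sg!(j-1) \<ge> 1 \<and> sg!(j-1) \<le> m" using sgb by simp
    have pa': "\<And>j. 1 \<le> j \<Longrightarrow> j \<le> m \<Longrightarrow> p!a < p!(i+(j-1))"
    proof - fix j assume "1 \<le> j" "j \<le> m" then have "j-1 < m" by simp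
      then show "p!a < p!(i+(j-1))" using pa by blast qed
    have pb': "\<And>j. 1 \<le> j \<Longrightarrow> j \<le> m \<Longrightarrow> p!(i+(j-1)) < p!b"
    proof - fix j assume "1 \<le> j" "j \<le> m" then have "j-1 < m" by simp
      then show "p!(i+(j-1)) < p!b" using pb by blast qed
    have c4: "(p ! ix x < p ! ix y) = (W ! x < W ! y)" if xy: "x < m+2" "y < m+2" for x y
    proof -
      consider (x0) "x=0" | (xm) "1\<le>x" "x\<le>m" | (xl) "x=m+1" using xy by linarith
      then show ?thesis
      proof cases
        case x0
        consider (y0) "y=0" | (ym) "1\<le>y" "y\<le>m" | (yl) "y=m+1" using xy by linarith
        then show ?thesis
        proof cases
          case ym then show ?thesis using x0 ixa ixm[OF ym] W0 Wm[OF ym] pa'[OF ym] sgb'[OF ym] by auto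
        qed (auto simp: x0 ixa ixb W0 Wl pab)
      next
        case xm
        consider (y0) "y=0" | (ym) "1\<le>y" "y\<le>m" | (yl) "y=m+1" using xy by linarith
        then show ?thesis
        proof cases
          case y0 then show ?thesis using xm ixa ixm[OF xm] W0 Wm[OF xm] pa'[OF xm] sgb'[OF xm] by auto
        next
          case ym then show ?thesis using xm ixm[OF xm] ixm[OF ym] Wm[OF xm] Wm[OF ym] bl2[of "x-1" "y-1"] by auto
        next
          case yl then show ?thesis using xm ixb ixm[OF xm] Wl Wm[OF xm] pb'[OF xm] sgb'[OF xm] by auto
        qed
      next
        case xl
        consider (y0) "y=0" | (ym) "1\<le>y" "y\<le>m" | (yl) "y=m+1" using xy by linarith
        then show ?thesis
        proof cases
          case ym then show ?thesis using xl ixb ixm[OF ym] Wl Wm[OF ym] pb'[OF ym] sgb'[OF ym] by auto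
        qed (use pab in \<open>auto simp: xl ixa ixb W0 Wl\<close>)
      qed
    qed
    have D0: "D ! 0 = True" unfolding D_def by simp
    have Dm: "D ! m = True" unfolding D_def using m1 by (simp add: nth_append)
    have q1: "\<forall>j<m+2. ix j < length p"
    proof (intro allI impI)
      fix j assume "j < m + 2"
      then show "ix j < length p" unfolding ix_def using ai ib bn by auto
    qed
    have q2: "\<forall>j. j + 1 < m+2 \<longrightarrow> ix j < ix (j + 1)"
    proof (intro allI impI)
      fix j assume "j + 1 < m + 2"
      then show "ix j < ix (j + 1)" unfolding ix_def using ai ib by auto
    qed
    have q3: "\<forall>j. j + 1 < m+2 \<longrightarrow> \<not> D ! j \<longrightarrow> ix (j + 1) = ix j + 1"
    proof (intro allI impI)
      fix j assume "j + 1 < m + 2" "\<not> D ! j"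
      then have "j \<noteq> 0" "j \<noteq> m" using D0 Dm by (metis, metis)
      then show "ix (j + 1) = ix j + 1" unfolding ix_def using \<open>j + 1 < m + 2\<close> by auto
    qed
    show "contains p (wrap sg)"
      unfolding contains_def wr prod.case lW
      apply (rule exI[of _ ix])
      using q1 q2 q3 c4 by blast
  qed
qed



definition spec :: "nat list \<Rightarrow> nat \<Rightarrow> bool" where
  "spec p i \<longleftrightarrow> (\<forall>j<i. p!i < p!j) \<or> (\<forall>j. i < j \<and> j < length p \<longrightarrow> p!j < p!i)"

definition gs :: "nat list \<Rightarrow> nat \<Rightarrow> nat" where
  "gs p i = Suc (Max {j. j < i \<and> spec p j})"

definition ge :: "nat list \<Rightarrow> nat \<Rightarrow> nat" where
  "ge p i = Min {j. i < j \<and> j < length p \<and> spec p j}"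

definition seg :: "nat list \<Rightarrow> nat \<Rightarrow> nat list" where
  "seg p i = map (nth p) [gs p i..<ge p i]"

lemma spec0: "spec p 0" unfolding spec_def by simp
lemma spec_last: "length p = Suc k \<Longrightarrow> spec p k" unfolding spec_def by auto

lemma gap_basic:
  assumes "i < length p" "\<not> spec p i"
  shows "0 < i" "gs p i \<le> i" "i < ge p i" "ge p i < length p" "spec p (gs p i - 1)"
    "spec p (ge p i)" "1 \<le> gs p i" "\<And>x. gs p i \<le> x \<Longrightarrow> x < ge p i \<Longrightarrow> \<not> spec p x"
proof -
  show i0: "0 < i" using assms spec0 by (cases i) auto
  let ?A = "{j. j < i \<and> spec p j}"
  let ?B = "{j. i < j \<and> j < length p \<and> spec p j}"
  have fA: "finite ?A" by auto
  have nA: "0 \<in> ?A" using i0 spec0 by auto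
  have fB: "finite ?B" by auto
  have nB: "length p - 1 \<in> ?B"
  proof -
    have sl: "spec p (length p - 1)" using assms(1) spec_last[of p "length p - 1"] by (cases "length p") auto
    then have "i \<noteq> length p - 1" using assms(2) by auto
    then show ?thesis using sl assms(1) by auto
  qed
  have MA: "Max ?A \<in> ?A" using fA nA Max_in by blast
  have MB: "Min ?B \<in> ?B" using fB nB Min_in by blast
  show "gs p i \<le> i" using MA unfolding gs_def by auto
  show "i < ge p i" using MB unfolding ge_def by auto
  show "ge p i < length p" using MB unfolding ge_def by auto
  show "spec p (gs p i - 1)" using MA unfolding gs_def by auto
  show "spec p (ge p i)" using MB unfolding ge_def by auto
  show "1 \<le> gs p i" unfolding gs_def by auto
  fix x assume x: "gs p i \<le> x" "x < ge p i"
  show "\<not> spec p x"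
  proof
    assume sx: "spec p x"
    show False
    proof (cases "x < i")
      case True
      then have "x \<le> Max ?A" using fA sx by auto
      then show False using x unfolding gs_def by auto
    next
      case False
      then have "i < x" using assms sx by (cases "x = i") auto
      moreover have "x < length p" using x MB unfolding ge_def by auto
      ultimately have "Min ?B \<le> x" using fB sx by auto
      then show False using x unfolding ge_def by auto
    qed
  qed
qed

lemma gap_same:
  assumes "i < length p" "\<not> spec p i" "gs p i \<le> j" "j < ge p i"
  shows "gs p j = gs p i" "ge p j = ge p i"
proof -
  have ns: "\<And>x. gs p i \<le> x \<Longrightarrow> x < ge p i \<Longrightarrow> \<not> spec p x" using gap_basic[OF assms(1,2)] by blast
  have "{x. x < j \<and> spec p x} = {x. x < i \<and> spec p x}"
  proof -
    have "x < j \<longleftrightarrow> x < i" if "spec p x" for x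
      using ns[of x] that assms(3,4) gap_basic(2,3)[OF assms(1,2)] by (cases "x < gs p i") auto
    then show ?thesis by blast
  qed
  then show "gs p j = gs p i" unfolding gs_def by simp
  have "{x. j < x \<and> x < length p \<and> spec p x} = {x. i < x \<and> x < length p \<and> spec p x}"
  proof -
    have "j < x \<longleftrightarrow> i < x" if "spec p x" for x
      using ns[of x] that assms(3,4) gap_basic(2,3)[OF assms(1,2)] by (cases "x < ge p i") auto
    then show ?thesis by blast
  qed
  then show "ge p j = ge p i" unfolding ge_def by simp
qed

lemma gap_in:
  assumes "i < length p" "\<not> spec p i" "i \<le> j" "\<And>x. i \<le> x \<Longrightarrow> x \<le> j \<Longrightarrow> \<not> spec p x"
  shows "j < ge p i"
proof (rule ccontr)
  assume "\<not> j < ge p i"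
  then show False using assms(4)[of "ge p i"] gap_basic[OF assms(1,2)] by auto
qed

lemma gap_low:
  assumes d: "distinct p" and i: "i < length p" and ns: "\<not> spec p i"
  shows "\<exists>t < gs p i. spec p t \<and> (\<forall>x. gs p i \<le> x \<longrightarrow> x < ge p i \<longrightarrow> p!t < p!x)"
proof -
  let ?s = "gs p i"
  have s1: "1 \<le> ?s" and sle: "?s \<le> i" and el: "ge p i < length p" using gap_basic[OF i ns] by auto
  obtain t where t: "t < ?s" "\<forall>j<?s. p!t \<le> p!j"
  proof -
    have "0 \<in> {..<?s}" using s1 by simp
    then have "finite ((\<lambda>j. p!j) ` {..<?s})" "(\<lambda>j. p!j) ` {..<?s} \<noteq> {}" by blast+
    then have "Min ((\<lambda>j. p!j) ` {..<?s}) \<in> (\<lambda>j. p!j) ` {..<?s}" by (rule Min_in)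
    then obtain t where "t < ?s" "p!t = Min ((\<lambda>j. p!j) ` {..<?s})" by auto
    then show ?thesis using that[of t] by auto
  qed
  have tn: "t < length p" using t sle i by auto
  have pinj: "\<And>a b. a < length p \<Longrightarrow> b < length p \<Longrightarrow> p!a = p!b \<Longrightarrow> a = b"
    using d nth_eq_iff_index_eq by blast
  have st: "spec p t" unfolding spec_def
  proof (rule disjI1, intro allI impI)
    fix j assume "j < t"
    have jn: "j < length p" using \<open>j < t\<close> tn by simp
    have "p!t \<le> p!j" using t \<open>j < t\<close> by auto
    moreover have "p!t \<noteq> p!j"
    proof
      assume "p!t = p!j" then have "t = j" using pinj[OF tn jn] by simp
      then show False using \<open>j < t\<close> by simp
    qed
    ultimately show "p!t < p!j" by simp
  qed
  have "x < ge p i \<longrightarrow> p!t < p!x" if "?s \<le> x" for x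
    using that
  proof (induction x rule: less_induct)
    case (less x)
    show ?case
    proof
      assume xe: "x < ge p i"
      have xn: "x < length p" using xe el by auto
      have ih: "\<And>y. ?s \<le> y \<Longrightarrow> y < x \<Longrightarrow> p!t < p!y" using less xe by auto
      show "p!t < p!x"
      proof (rule ccontr)
        assume "\<not> p!t < p!x"
        moreover have "p!t \<noteq> p!x" using pinj[OF tn xn] t less.prems by auto
        ultimately have lt: "p!x < p!t" by auto
        have "spec p x" unfolding spec_def
        proof (rule disjI1, intro allI impI)
          fix j assume "j < x"
          show "p!x < p!j"
          proof (cases "j < ?s")
            case True then show ?thesis using t lt by (meson order.strict_trans2)
          next
            case False then show ?thesis using ih[of j] \<open>j < x\<close> lt by auto
          qed
        qed
        then show False using gap_basic(8)[OF i ns less.prems xe] by simp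
      qed
    qed
  qed
  then show ?thesis using t st by blast
qed

lemma gap_high:
  assumes d: "distinct p" and i: "i < length p" and ns: "\<not> spec p i"
  shows "\<exists>u. ge p i \<le> u \<and> u < length p \<and> spec p u \<and> (\<forall>x. gs p i \<le> x \<longrightarrow> x < ge p i \<longrightarrow> p!x < p!u)"
proof -
  let ?e = "ge p i"
  have el: "?e < length p" and sle: "gs p i \<le> i" and ie: "i < ?e" using gap_basic[OF i ns] by auto
  let ?U = "{?e..<length p}"
  obtain u where u: "u \<in> ?U" "\<forall>j\<in>?U. p!j \<le> p!u"
  proof -
    have "finite ((\<lambda>j. p!j) ` ?U)" "(\<lambda>j. p!j) ` ?U \<noteq> {}" using el by auto
    then have "Max ((\<lambda>j. p!j) ` ?U) \<in> (\<lambda>j. p!j) ` ?U" by (rule Max_in)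
    then obtain u where "u \<in> ?U" "p!u = Max ((\<lambda>j. p!j) ` ?U)" by auto
    then show ?thesis using that[of u] by auto
  qed
  have un: "u < length p" using u by auto
  have pinj: "\<And>a b. a < length p \<Longrightarrow> b < length p \<Longrightarrow> p!a = p!b \<Longrightarrow> a = b"
    using d nth_eq_iff_index_eq by blast
  have su: "spec p u" unfolding spec_def
  proof (rule disjI2, intro allI impI)
    fix j assume j: "u < j \<and> j < length p"
    then have "p!j \<le> p!u" using u by auto
    moreover have "p!j \<noteq> p!u"
    proof
      assume "p!j = p!u" then have "u = j" using pinj[OF un, of j] j by simp
      then show False using j by simp
    qed
    ultimately show "p!j < p!u" by auto
  qed
  have "gs p i \<le> x \<longrightarrow> p!x < p!u" if "x < ?e" for x
    using that
  proof (induction "?e - x" arbitrary: x rule: less_induct)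
    case (less x)
    show ?case
    proof
      assume xs: "gs p i \<le> x"
      have xn: "x < length p" using less.prems el by auto
      have ih: "\<And>y. x < y \<Longrightarrow> y < ?e \<Longrightarrow> p!y < p!u"
      proof -
        fix y assume y: "x < y" "y < ?e"
        then have "?e - y < ?e - x" by simp
        moreover have "gs p i \<le> y" using xs y by simp
        ultimately show "p!y < p!u" using less.hyps y by blast
      qed
      show "p!x < p!u"
      proof (rule ccontr)
        assume "\<not> p!x < p!u"
        moreover have "p!u \<noteq> p!x" using pinj[OF un xn] u less.prems by auto
        ultimately have lt: "p!u < p!x" by auto
        have "spec p x" unfolding spec_def
        proof (rule disjI2, intro allI impI)
          fix j assume j: "x < j \<and> j < length p"
          show "p!j < p!x"
          proof (cases "j < ?e")
            case False then show ?thesis using u j lt by (meson atLeastLessThan_iff not_less order.strict_trans1)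
          next
            case True then show ?thesis using ih[of j] j lt by auto
          qed
        qed
        then show False using gap_basic(8)[OF i ns xs less.prems] by simp
      qed
    qed
  qed
  then show ?thesis using u su by auto
qed



definition G :: "nat list \<Rightarrow> nat \<Rightarrow> nat set" where
  "G p i = (if spec p i then {i} else {gs p i..<ge p i})"

lemma G_self: "i < length p \<Longrightarrow> i \<in> G p i"
  unfolding G_def using gap_basic(2,3)[of i p] by auto

lemma G_sub: "i < length p \<Longrightarrow> G p i \<subseteq> {..<length p}"
  unfolding G_def using gap_basic(4)[of i p] by auto

lemma G_mem: assumes "i < length p" "j \<in> G p i" shows "G p j = G p i"
proof (cases "spec p i")
  case True then show ?thesis using assms unfolding G_def by auto
next
  case False
  then have j: "gs p i \<le> j" "j < ge p i" using assms unfolding G_def by auto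
  have "\<not> spec p j" using gap_basic(8)[OF assms(1) False j] .
  then show ?thesis using gap_same[OF assms(1) False j] False unfolding G_def by auto
qed

lemma G_disj: assumes "i < length p" "j < length p" "G p i \<noteq> G p j" shows "G p i \<inter> G p j = {}"
proof (rule ccontr)
  assume "G p i \<inter> G p j \<noteq> {}"
  then obtain x where "x \<in> G p i" "x \<in> G p j" by blast
  then show False using G_mem[OF assms(1)] G_mem[OF assms(2)] assms(3) by metis
qed

lemma G_before: assumes "i < length p" "spec p i" "j < i" "x \<in> G p j" shows "x < i"
proof (cases "spec p j")
  case True then show ?thesis using assms unfolding G_def by auto
next
  case False
  have jn: "j < length p" using assms by simp
  have "ge p j \<le> i" unfolding ge_def using assms by (intro Min_le) auto
  then show ?thesis using assms False unfolding G_def by auto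
qed

lemma G_after: assumes "i < length p" "spec p i" "i < j" "j < length p" "x \<in> G p j" shows "i < x"
proof (cases "spec p j")
  case True then show ?thesis using assms unfolding G_def by auto
next
  case False
  have "i \<le> Max {x. x < j \<and> spec p x}" using assms by (intro Max_ge) auto
  then have "i < gs p j" unfolding gs_def by simp
  then show ?thesis using assms False unfolding G_def by auto
qed

lemma rearr:
  assumes len: "length q = length p" and d: "distinct p"
    and sp: "\<forall>i<length p. spec p i \<longrightarrow> q!i = p!i"
    and gp: "\<forall>i<length p. \<not> spec p i \<longrightarrow> distinct (map (nth q) [gs p i..<ge p i]) \<and>
                set (map (nth q) [gs p i..<ge p i]) = set (seg p i)"
  shows "distinct q" "set q = set p" "\<forall>i<length p. spec q i = spec p i"
proof -
  let ?n = "length p"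
  have L2: "q!i \<in> (nth p) ` G p i" if i: "i < ?n" for i
  proof (cases "spec p i")
    case True then show ?thesis using sp i unfolding G_def by auto
  next
    case False
    let ?L = "map (nth q) [gs p i..<ge p i]"
    have b: "gs p i \<le> i" "i < ge p i" using gap_basic[OF i False] by auto
    have "q!i = ?L ! (i - gs p i)" using b by simp
    moreover have "i - gs p i < length ?L" using b by simp
    ultimately have "q!i \<in> set ?L" by (metis nth_mem)
    then have "q!i \<in> set (seg p i)" using gp i False by blast
    then show ?thesis unfolding seg_def G_def using False by auto
  qed
  have pinj: "\<And>a b. a < ?n \<Longrightarrow> b < ?n \<Longrightarrow> p!a = p!b \<Longrightarrow> a = b"
    using d nth_eq_iff_index_eq by blast
  show dq: "distinct q"
    unfolding distinct_conv_nth
  proof (intro allI impI)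
    fix i j assume ij: "i < length q" "j < length q" "i \<noteq> j"
    then have i: "i < ?n" and j: "j < ?n" using len by auto
    show "q!i \<noteq> q!j"
    proof (cases "G p i = G p j")
      case True
      show ?thesis
      proof (cases "spec p i")
        case True
        then show ?thesis using \<open>G p i = G p j\<close> G_self[OF j] ij unfolding G_def by auto
      next
        case False
        let ?L = "map (nth q) [gs p i..<ge p i]"
        have b: "gs p i \<le> i" "i < ge p i" using gap_basic[OF i False] by auto
        have "j \<in> G p i" using \<open>G p i = G p j\<close> G_self[OF j] by simp
        then have bj: "gs p i \<le> j" "j < ge p i" using False unfolding G_def by auto
        have dl: "distinct ?L" using gp i False by blast
        have "?L ! (i - gs p i) \<noteq> ?L ! (j - gs p i)"
          using dl[unfolded distinct_conv_nth, rule_format, of "i - gs p i" "j - gs p i"] b bj ij(3) by auto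
        then show ?thesis using b bj by simp
      qed
    next
      case False
      obtain a where a: "a \<in> G p i" "q!i = p!a" using L2[OF i] by auto
      obtain b where b: "b \<in> G p j" "q!j = p!b" using L2[OF j] by auto
      have "a \<noteq> b" using G_disj[OF i j False] a b by auto
      moreover have "a < ?n" "b < ?n" using G_sub[OF i] G_sub[OF j] a b by auto
      ultimately show ?thesis using pinj a b by auto
    qed
  qed
  have sub: "set q \<subseteq> set p"
  proof
    fix v assume "v \<in> set q"
    then obtain i where i: "i < length q" "v = q!i" by (metis in_set_conv_nth)
    then obtain a where "a \<in> G p i" "v = p!a" using L2 len by auto
    moreover have "a < ?n" using G_sub[of i p] i len \<open>a \<in> G p i\<close> by auto
    ultimately show "v \<in> set p" by simp
  qed
  have "card (set q) = card (set p)" using dq d len by (simp add: distinct_card)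
  then show "set q = set p" using sub by (simp add: card_subset_eq)
  show "\<forall>i<length p. spec q i = spec p i"
  proof (intro allI impI)
    fix i assume i: "i < ?n"
    show "spec q i = spec p i"
    proof (cases "spec p i")
      case True
      have qi: "q!i = p!i" using sp i True by auto
      have "spec q i"
      proof (cases "\<forall>j<i. p!i < p!j")
        case True
        show ?thesis unfolding spec_def
        proof (rule disjI1, intro allI impI)
          fix j assume j: "j < i"
          then obtain a where a: "a \<in> G p j" "q!j = p!a" using L2[of j] i by auto
          have "a < i" using G_before[OF i \<open>spec p i\<close> j a(1)] .
          then show "q!i < q!j" using True qi a by auto
        qed
      next
        case False
        then have rl: "\<forall>j. i < j \<and> j < ?n \<longrightarrow> p!j < p!i" using \<open>spec p i\<close> unfolding spec_def by blast
        show ?thesis unfolding spec_def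
        proof (rule disjI2, intro allI impI)
          fix j assume j: "i < j \<and> j < length q"
          then obtain a where a: "a \<in> G p j" "q!j = p!a" using L2[of j] len by auto
          have "i < a" using G_after[OF i \<open>spec p i\<close> _ _ a(1)] j len by auto
          moreover have "a < ?n" using G_sub[of j p] a j len by auto
          ultimately show "q!j < q!i" using rl qi a by auto
        qed
      qed
      then show ?thesis using True by simp
    next
      case False
      obtain t where t: "t < gs p i" "spec p t" "\<forall>x. gs p i \<le> x \<longrightarrow> x < ge p i \<longrightarrow> p!t < p!x"
        using gap_low[OF d i False] by blast
      obtain u where u: "ge p i \<le> u" "u < ?n" "spec p u" "\<forall>x. gs p i \<le> x \<longrightarrow> x < ge p i \<longrightarrow> p!x < p!u"
        using gap_high[OF d i False] by blast
      have b: "gs p i \<le> i" "i < ge p i" using gap_basic[OF i False] by auto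
      obtain a where a: "a \<in> G p i" "q!i = p!a" using L2[OF i] by auto
      then have ab: "gs p i \<le> a" "a < ge p i" using False unfolding G_def by auto
      have qt: "q!t = p!t" using sp t b i by auto
      have qu: "q!u = p!u" using sp u by auto
      have "\<not> spec q i" unfolding spec_def
      proof
        assume "(\<forall>j<i. q ! i < q ! j) \<or> (\<forall>j. i < j \<and> j < length q \<longrightarrow> q ! j < q ! i)"
        then show False
        proof
          assume "\<forall>j<i. q ! i < q ! j"
          then have "q!i < q!t" using t b by auto
          then show False using qt a t(3) ab by auto
        next
          assume "\<forall>j. i < j \<and> j < length q \<longrightarrow> q ! j < q ! i"
          then have "q!u < q!i" using u b len by auto
          then show False using qu a u(4) ab by auto
        qed
      qed
      then show ?thesis using False by simp
    qed
  qed
qed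

lemma spec_eq_gaps:
  assumes "length q = length p" "\<forall>j<length p. spec q j = spec p j" "i < length p"
  shows "gs q i = gs p i" "ge q i = ge p i"
proof -
  have "{j. j < i \<and> spec q j} = {j. j < i \<and> spec p j}" using assms by auto
  then show "gs q i = gs p i" unfolding gs_def by simp
  have "{j. i < j \<and> j < length q \<and> spec q j} = {j. i < j \<and> j < length p \<and> spec p j}" using assms by auto
  then show "ge q i = ge p i" unfolding ge_def by simp
qed



lemma seg_len: "i < length p \<Longrightarrow> \<not> spec p i \<Longrightarrow> length (seg p i) = ge p i - gs p i"
  unfolding seg_def by simp

lemma seg_nth: "x < ge p i - gs p i \<Longrightarrow> seg p i ! x = p ! (gs p i + x)"
  unfolding seg_def by simp

lemma seg_avoid:
  assumes d: "distinct p" and sp: "sg \<in> perms m" and m1: "m \<ge> 1"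
    and av: "\<not> contains p (wrap sg)" and i: "i < length p" and ns: "\<not> spec p i"
  shows "\<not> contains (seg p i) (consec sg)"
proof
  assume "contains (seg p i) (consec sg)"
  then obtain off where bo: "blk (seg p i) sg off" using consec_iff perms_len[OF sp] m1 by auto
  have len: "length sg = m" using perms_len[OF sp] .
  let ?s = "gs p i" and ?e = "ge p i"
  have b: "?s \<le> i" "i < ?e" "?e < length p" using gap_basic[OF i ns] by auto
  have om: "off + m \<le> ?e - ?s" using bo seg_len[OF i ns] len unfolding blk_def by auto
  have sn: "\<And>x. x < m \<Longrightarrow> seg p i ! (off + x) = p ! (?s + off + x)"
    using om seg_nth[of _ p i] by (simp add: add.assoc)
  have blp: "blk p sg (?s + off)" unfolding blk_def len
  proof (intro conjI allI impI)
    show "?s + off + m \<le> length p" using om b by auto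
    fix a b assume ab: "a < m" "b < m"
    have "(seg p i ! (off + a) < seg p i ! (off + b)) = (sg ! a < sg ! b)"
      using bo ab unfolding blk_def len by blast
    then show "(p ! (?s + off + a) < p ! (?s + off + b)) = (sg ! a < sg ! b)"
      using sn[OF ab(1)] sn[OF ab(2)] by simp
  qed
  obtain t where t: "t < ?s" "spec p t" "\<forall>x. ?s \<le> x \<longrightarrow> x < ?e \<longrightarrow> p!t < p!x"
    using gap_low[OF d i ns] by blast
  obtain u where u: "?e \<le> u" "u < length p" "spec p u" "\<forall>x. ?s \<le> x \<longrightarrow> x < ?e \<longrightarrow> p!x < p!u"
    using gap_high[OF d i ns] by blast
  have "contains p (wrap sg)"
    unfolding wrap_iff[OF sp m1]
  proof (intro exI conjI allI impI)
    show "t < ?s + off" using t by simp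
    show "blk p sg (?s + off)" by (rule blp)
    show "?s + off + m \<le> u" using om u b by auto
    show "u < length p" by (rule u(2))
    fix x assume "x < m"
    then have "?s \<le> ?s + off + x" "?s + off + x < ?e" using om b by auto
    then show "p!t < p!(?s + off + x)" "p!(?s + off + x) < p!u" using t(3) u(4) by auto
  qed
  then show False using av by simp
qed

lemma avoid_from_segs:
  assumes sp: "sg \<in> perms m" and m1: "m \<ge> 1"
    and segs: "\<forall>i<length q. \<not> spec q i \<longrightarrow> \<not> contains (seg q i) (consec sg)"
  shows "\<not> contains q (wrap sg)"
proof
  assume "contains q (wrap sg)"
  then obtain a i b where ai: "a < i" and bl: "blk q sg i" and ib: "i + m \<le> b" and bn: "b < length q"
      and pa: "\<forall>x<m. q!a < q!(i+x)" and pb: "\<forall>x<m. q!(i+x) < q!b"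
    unfolding wrap_iff[OF sp m1] by blast
  have len: "length sg = m" using perms_len[OF sp] .
  have nsx: "\<not> spec q x" if "i \<le> x" "x \<le> i + m - 1" for x
  proof
    assume "spec q x"
    have xm: "x - i < m" using that m1 by auto
    have xx: "i + (x - i) = x" using that by simp
    from \<open>spec q x\<close> show False unfolding spec_def
    proof
      assume "\<forall>j<x. q ! x < q ! j"
      then have "q!x < q!a" using ai that by auto
      then show False using pa xm xx by (metis less_asym)
    next
      assume "\<forall>j. x < j \<and> j < length q \<longrightarrow> q ! j < q ! x"
      then have "q!b < q!x" using ib bn that m1 by auto
      then show False using pb xm xx by (metis less_asym)
    qed
  qed
  have i: "i < length q" using ib bn m1 by auto
  have nsi: "\<not> spec q i" using nsx[of i] m1 by auto
  have ie: "i + m - 1 < ge q i" using gap_in[OF i nsi, of "i + m - 1"] nsx m1 by auto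
  have si: "gs q i \<le> i" using gap_basic[OF i nsi] by auto
  have "blk (seg q i) sg (i - gs q i)" unfolding blk_def len
  proof (intro conjI allI impI)
    show "i - gs q i + m \<le> length (seg q i)" using seg_len[OF i nsi] ie si m1 by auto
    fix x y assume xy: "x < m" "y < m"
    have "seg q i ! (i - gs q i + x) = q ! (i + x)" "seg q i ! (i - gs q i + y) = q ! (i + y)"
      using seg_nth[of _ q i] xy ie si by auto
    then show "(seg q i ! (i - gs q i + x) < seg q i ! (i - gs q i + y)) = (sg ! x < sg ! y)"
      using bl xy unfolding blk_def len by auto
  qed
  then have "contains (seg q i) (consec sg)" using consec_iff len m1 by auto
  then show False using segs i nsi by auto
qed

definition phi :: "(nat set \<Rightarrow> nat list \<Rightarrow> nat list) \<Rightarrow> nat list \<Rightarrow> nat list" where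
  "phi \<beta> p = map (\<lambda>i. if spec p i then p!i else \<beta> (set (seg p i)) (seg p i) ! (i - gs p i)) [0..<length p]"

lemma seg_distinct: "distinct p \<Longrightarrow> i < length p \<Longrightarrow> \<not> spec p i \<Longrightarrow> distinct (seg p i)"
  unfolding seg_def using gap_basic(4)[of i p]
  by (auto simp: distinct_map inj_on_def nth_eq_iff_index_eq)

lemma phi_props:
  assumes d: "distinct p"
    and hb: "\<forall>i<length p. \<not> spec p i \<longrightarrow> distinct (\<beta> (set (seg p i)) (seg p i)) \<and>
                 set (\<beta> (set (seg p i)) (seg p i)) = set (seg p i)"
  shows "length (phi \<beta> p) = length p"
    "\<forall>i<length p. spec p i \<longrightarrow> phi \<beta> p ! i = p ! i"
    "\<forall>i<length p. \<not> spec p i \<longrightarrow> map (nth (phi \<beta> p)) [gs p i..<ge p i] = \<beta> (set (seg p i)) (seg p i)"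
proof -
  show "length (phi \<beta> p) = length p" unfolding phi_def by simp
  show "\<forall>i<length p. spec p i \<longrightarrow> phi \<beta> p ! i = p ! i" unfolding phi_def by simp
  show "\<forall>i<length p. \<not> spec p i \<longrightarrow> map (nth (phi \<beta> p)) [gs p i..<ge p i] = \<beta> (set (seg p i)) (seg p i)"
  proof (intro allI impI)
    fix i assume i: "i < length p" and ns: "\<not> spec p i"
    let ?L = "\<beta> (set (seg p i)) (seg p i)"
    have b: "gs p i \<le> i" "i < ge p i" "ge p i < length p" using gap_basic[OF i ns] by auto
    have dL: "distinct ?L" and sL: "set ?L = set (seg p i)" using hb i ns by auto
    have "length ?L = card (set ?L)" using dL by (simp add: distinct_card)
    also have "\<dots> = card (set (seg p i))" using sL by simp
    also have "\<dots> = length (seg p i)" using seg_distinct[OF d i ns] by (simp add: distinct_card)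
    finally have lL: "length ?L = ge p i - gs p i" using seg_len[OF i ns] by simp
    show "map (nth (phi \<beta> p)) [gs p i..<ge p i] = ?L"
    proof (rule nth_equalityI)
      show "length (map (nth (phi \<beta> p)) [gs p i..<ge p i]) = length ?L" using lL by simp
      fix x assume "x < length (map (nth (phi \<beta> p)) [gs p i..<ge p i])"
      then have x: "x < ge p i - gs p i" by simp
      let ?y = "gs p i + x"
      have y: "gs p i \<le> ?y" "?y < ge p i" using x by auto
      have nsy: "\<not> spec p ?y" using gap_basic(8)[OF i ns y] .
      have gy: "gs p ?y = gs p i" "ge p ?y = ge p i" using gap_same[OF i ns y] by auto
      have sy: "seg p ?y = seg p i" unfolding seg_def gy ..
      have yn: "?y < length p" using y b by auto
      have "phi \<beta> p ! ?y = ?L ! x" unfolding phi_def using yn nsy gy sy by simp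
      then show "map (nth (phi \<beta> p)) [gs p i..<ge p i] ! x = ?L ! x" using x by simp
    qed
  qed
qed



definition Av :: "nat set \<Rightarrow> nat list \<Rightarrow> nat list set" where
  "Av V sg = {xs. distinct xs \<and> set xs = V \<and> \<not> contains xs (consec sg)}"

lemma Av_finite: "finite V \<Longrightarrow> finite (Av V sg)"
proof -
  assume f: "finite V"
  have "Av V sg \<subseteq> {xs. set xs \<subseteq> V \<and> length xs = card V}"
    unfolding Av_def by (auto simp: distinct_card)
  moreover have "finite {xs. set xs \<subseteq> V \<and> length xs = card V}" using finite_lists_length_eq[OF f] .
  ultimately show ?thesis by (rule finite_subset)
qed

lemma perms_finite: "finite (perms n)"
proof -
  have "perms n \<subseteq> {xs. set xs \<subseteq> {1..n} \<and> length xs = n}"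
    unfolding perms_def by (auto simp: distinct_card[symmetric])
  moreover have "finite {xs. set xs \<subseteq> {1..n} \<and> length xs = n}" by (rule finite_lists_length_eq) simp
  ultimately show ?thesis by (rule finite_subset)
qed

lemma relabel:
  assumes f: "finite V" and ne: "V \<noteq> {}"
  shows "card (Av V sg) = alpha (consec sg) (card V)"
proof -
  define rk where "rk x = card {y \<in> V. y \<le> x}" for x
  have mono: "rk x < rk y" if "x \<in> V" "y \<in> V" "x < y" for x y
  proof -
    have "y \<in> {z \<in> V. z \<le> y}" "y \<notin> {z \<in> V. z \<le> x}" using that by auto
    moreover have "{z \<in> V. z \<le> x} \<subseteq> {z \<in> V. z \<le> y}" using that by auto
    ultimately have "{z \<in> V. z \<le> x} \<subset> {z \<in> V. z \<le> y}" by blast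
    then show ?thesis unfolding rk_def by (rule psubset_card_mono[rotated]) (use f in auto)
  qed
  have iff: "(rk x < rk y) = (x < y)" if "x \<in> V" "y \<in> V" for x y
    using mono[OF that] mono[OF that(2,1)] by (metis less_asym linorder_neqE_nat)
  have inj: "inj_on rk V" unfolding inj_on_def using mono by (metis less_irrefl linorder_neqE_nat)
  have rng: "rk ` V \<subseteq> {1..card V}"
  proof
    fix z assume "z \<in> rk ` V"
    then obtain x where x: "x \<in> V" "z = rk x" by auto
    have "x \<in> {y \<in> V. y \<le> x}" using x by simp
    then have "{y \<in> V. y \<le> x} \<noteq> {}" by blast
    then have "1 \<le> rk x" unfolding rk_def using f by (simp add: Suc_le_eq card_gt_0_iff)
    moreover have "rk x \<le> card V" unfolding rk_def using f by (intro card_mono) auto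
    ultimately show "z \<in> {1..card V}" using x by auto
  qed
  have img: "rk ` V = {1..card V}"
    using rng card_image[OF inj] by (intro card_subset_eq) auto
  have bij: "bij_betw (map rk) (Av V sg) {p \<in> perms (card V). avoids p (consec sg)}"
  proof (rule bij_betw_imageI)
    show "inj_on (map rk) (Av V sg)"
      unfolding inj_on_def Av_def using inj
      by (auto simp: inj_on_map_eq_map)
    show "map rk ` Av V sg = {p \<in> perms (card V). avoids p (consec sg)}"
    proof
      show "map rk ` Av V sg \<subseteq> {p \<in> perms (card V). avoids p (consec sg)}"
      proof
        fix p assume "p \<in> map rk ` Av V sg"
        then obtain xs where xs: "xs \<in> Av V sg" "p = map rk xs" by auto
        have "contains (map rk xs) (consec sg) = contains xs (consec sg)"
          by (rule contains_map_mono) (use xs iff in \<open>auto simp: Av_def\<close>)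
        then show "p \<in> {p \<in> perms (card V). avoids p (consec sg)}"
          using xs inj img unfolding Av_def perms_def avoids_def
          by (auto simp: distinct_map)
      qed
    next
      show "{p \<in> perms (card V). avoids p (consec sg)} \<subseteq> map rk ` Av V sg"
      proof
        fix p assume p: "p \<in> {p \<in> perms (card V). avoids p (consec sg)}"
        define xs where "xs = map (the_inv_into V rk) p"
        have sp: "set p = rk ` V" using p img unfolding perms_def by auto
        have mp: "map rk xs = p" unfolding xs_def map_map
        proof (rule map_idI)
          fix z assume "z \<in> set p"
          then show "(rk \<circ> the_inv_into V rk) z = z" using sp inj by (simp add: f_the_inv_into_f)
        qed
        have sx: "set xs = V" unfolding xs_def using sp inj by simp
        have dx: "distinct xs" unfolding xs_def using p sp inj_on_the_inv_into[OF inj]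
          unfolding perms_def by (auto simp: distinct_map)
        have "contains (map rk xs) (consec sg) = contains xs (consec sg)"
          by (rule contains_map_mono) (use sx iff in auto)
        then have "\<not> contains xs (consec sg)" using p mp unfolding avoids_def by auto
        then have "xs \<in> Av V sg" using sx dx unfolding Av_def by auto
        then show "p \<in> map rk ` Av V sg" using mp by force
      qed
    qed
  qed
  have "card V \<noteq> 0" using f ne by auto
  then show ?thesis using bij_betw_same_card[OF bij] unfolding alpha_def by simp
qed



lemma phi_good:
  assumes sp: "sg \<in> perms m" and tp: "tg \<in> perms m" and m1: "m \<ge> 1"
    and hb: "\<forall>V. finite V \<and> V \<noteq> {} \<longrightarrow> \<beta> V ` Av V sg \<subseteq> Av V tg \<and> inj_on (\<beta> V) (Av V sg)"
    and p: "p \<in> perms n" "avoids p (wrap sg)"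
  shows "phi \<beta> p \<in> perms n" "avoids (phi \<beta> p) (wrap tg)"
    "\<forall>j<length p. spec (phi \<beta> p) j = spec p j"
    "\<forall>i<length p. \<not> spec p i \<longrightarrow> seg p i \<in> Av (set (seg p i)) sg \<and>
        map (nth (phi \<beta> p)) [gs p i..<ge p i] = \<beta> (set (seg p i)) (seg p i)"
    "length (phi \<beta> p) = length p"
proof -
  let ?q = "phi \<beta> p"
  have d: "distinct p" and sp0: "set p = {1..n}" using p unfolding perms_def by auto
  have inAv: "seg p i \<in> Av (set (seg p i)) sg" if i: "i < length p" "\<not> spec p i" for i
    using seg_avoid[OF d sp m1 _ i] seg_distinct[OF d i] p(2) unfolding Av_def avoids_def by auto
  have bAv: "\<beta> (set (seg p i)) (seg p i) \<in> Av (set (seg p i)) tg" if i: "i < length p" "\<not> spec p i" for i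
  proof -
    have "length (seg p i) > 0" using seg_len[OF i] gap_basic(3,2)[OF i] by auto
    then have "set (seg p i) \<noteq> {}" by auto
    then show ?thesis using hb inAv[OF i] by blast
  qed
  have hb2: "\<forall>i<length p. \<not> spec p i \<longrightarrow> distinct (\<beta> (set (seg p i)) (seg p i)) \<and>
                 set (\<beta> (set (seg p i)) (seg p i)) = set (seg p i)"
    using bAv unfolding Av_def by blast
  note pp = phi_props[where p=p and \<beta>=\<beta>, OF d hb2]
  show lq: "length ?q = length p" by (rule pp(1))
  have gp: "\<forall>i<length p. \<not> spec p i \<longrightarrow> distinct (map (nth ?q) [gs p i..<ge p i]) \<and>
                set (map (nth ?q) [gs p i..<ge p i]) = set (seg p i)"
    using pp(3) hb2 by auto
  note rr = rearr[OF lq d pp(2) gp]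
  show ssp: "\<forall>j<length p. spec ?q j = spec p j" by (rule rr(3))
  show "?q \<in> perms n" using rr(1,2) sp0 unfolding perms_def by auto
  show "\<forall>i<length p. \<not> spec p i \<longrightarrow> seg p i \<in> Av (set (seg p i)) sg \<and>
        map (nth ?q) [gs p i..<ge p i] = \<beta> (set (seg p i)) (seg p i)"
    using inAv pp(3) by blast
  have "\<not> contains ?q (wrap tg)"
  proof (rule avoid_from_segs[OF tp m1], intro allI impI)
    fix i assume i: "i < length ?q" and ns: "\<not> spec ?q i"
    have ip: "i < length p" using i lq by simp
    have nsp: "\<not> spec p i" using ns ssp ip by simp
    have "seg ?q i = map (nth ?q) [gs p i..<ge p i]"
      unfolding seg_def using spec_eq_gaps[OF lq ssp ip] by simp
    also have "\<dots> = \<beta> (set (seg p i)) (seg p i)" using pp(3) ip nsp by blast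
    finally show "\<not> contains (seg ?q i) (consec tg)" using bAv[OF ip nsp] unfolding Av_def by simp
  qed
  then show "avoids ?q (wrap tg)" unfolding avoids_def .
qed

lemma main_le:
  assumes sp: "sg \<in> perms m" and tp: "tg \<in> perms m" and m1: "m \<ge> 1"
    and eq: "\<forall>n. alpha (consec sg) n = alpha (consec tg) n"
  shows "card {p \<in> perms n. avoids p (wrap sg)} \<le> card {p \<in> perms n. avoids p (wrap tg)}"
proof -
  have "\<forall>V. \<exists>f. finite V \<and> V \<noteq> {} \<longrightarrow> f ` Av V sg \<subseteq> Av V tg \<and> inj_on f (Av V sg)"
  proof
    fix V
    show "\<exists>f. finite V \<and> V \<noteq> {} \<longrightarrow> f ` Av V sg \<subseteq> Av V tg \<and> inj_on f (Av V sg)"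
    proof (cases "finite V \<and> V \<noteq> {}")
      case True
      then have "card (Av V sg) \<le> card (Av V tg)" using relabel eq by simp
      then obtain f where "f ` Av V sg \<subseteq> Av V tg \<and> inj_on f (Av V sg)"
        using card_le_inj[OF Av_finite Av_finite] True by blast
      then show ?thesis by blast
    qed auto
  qed
  then obtain \<beta> where hb: "\<forall>V. finite V \<and> V \<noteq> {} \<longrightarrow> \<beta> V ` Av V sg \<subseteq> Av V tg \<and> inj_on (\<beta> V) (Av V sg)"
    by metis
  let ?A = "{p \<in> perms n. avoids p (wrap sg)}"
  let ?B = "{p \<in> perms n. avoids p (wrap tg)}"
  note pg = phi_good[OF sp tp m1 hb]
  have img: "phi \<beta> ` ?A \<subseteq> ?B" using pg(1,2) by blast
  have inj: "inj_on (phi \<beta>) ?A"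
  proof (rule inj_onI)
    fix p1 p2 assume p1: "p1 \<in> ?A" and p2: "p2 \<in> ?A" and e: "phi \<beta> p1 = phi \<beta> p2"
    note g1 = pg[of p1 n] and g2 = pg[of p2 n]
    have l1: "length p1 = n" and l2: "length p2 = n" using p1 p2 perms_len by auto
    have ss: "\<forall>j<length p2. spec p1 j = spec p2 j" using g1(3) g2(3) p1 p2 e l1 l2 by auto
    show "p1 = p2"
    proof (rule nth_equalityI)
      show "length p1 = length p2" using l1 l2 by simp
      fix i assume i1: "i < length p1"
      then have i2: "i < length p2" using l1 l2 by simp
      show "p1 ! i = p2 ! i"
      proof (cases "spec p1 i")
        case True
        then have "spec p2 i" using ss i2 by simp
        have "phi \<beta> p1 ! i = p1 ! i" unfolding phi_def using True i1 by simp
        moreover have "phi \<beta> p2 ! i = p2 ! i" unfolding phi_def using \<open>spec p2 i\<close> i2 by simp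
        ultimately show ?thesis using e by simp
      next
        case False
        then have ns2: "\<not> spec p2 i" using ss i2 by simp
        have gg: "gs p1 i = gs p2 i" "ge p1 i = ge p2 i" using spec_eq_gaps[OF _ ss i2] l1 l2 by auto
        have A1: "seg p1 i \<in> Av (set (seg p1 i)) sg" and M1: "map (nth (phi \<beta> p1)) [gs p1 i..<ge p1 i] = \<beta> (set (seg p1 i)) (seg p1 i)"
          using g1(4) p1 i1 False by auto
        have A2: "seg p2 i \<in> Av (set (seg p2 i)) sg" and M2: "map (nth (phi \<beta> p2)) [gs p2 i..<ge p2 i] = \<beta> (set (seg p2 i)) (seg p2 i)"
          using g2(4) p2 i2 ns2 by auto
        have be: "\<beta> (set (seg p1 i)) (seg p1 i) = \<beta> (set (seg p2 i)) (seg p2 i)" using M1 M2 e gg by simp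
        have fin: "finite (set (seg p1 i))" by simp
        have ne1: "set (seg p1 i) \<noteq> {}" using seg_len[OF i1 False] gap_basic(2,3)[OF i1 False] by auto
        have "set (\<beta> (set (seg p1 i)) (seg p1 i)) = set (seg p1 i)" using hb fin ne1 A1 unfolding Av_def by blast
        moreover have ne2: "set (seg p2 i) \<noteq> {}" using seg_len[OF i2 ns2] gap_basic(2,3)[OF i2 ns2] by auto
        then have "set (\<beta> (set (seg p2 i)) (seg p2 i)) = set (seg p2 i)" using hb A2 unfolding Av_def by blast
        ultimately have Veq: "set (seg p1 i) = set (seg p2 i)" using be by simp
        have "seg p1 i = seg p2 i"
          using hb fin ne1 A1 A2 be Veq unfolding inj_on_def by metis
        moreover have "p1 ! i = seg p1 i ! (i - gs p1 i)" "p2 ! i = seg p2 i ! (i - gs p2 i)"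
          using seg_nth[of "i - gs p1 i" p1 i] seg_nth[of "i - gs p2 i" p2 i]
            gap_basic(2,3)[OF i1 False] gap_basic(2,3)[OF i2 ns2] by auto
        ultimately show ?thesis using gg by simp
      qed
    qed
  qed
  have "finite ?B" using perms_finite by simp
  then show ?thesis using card_inj_on_le[OF inj img] by simp
qed

lemma egf_eq_iff: "egf P = egf Q \<longleftrightarrow> (\<forall>n. alpha P n = alpha Q n)"
proof
  assume e: "egf P = egf Q"
  show "\<forall>n. alpha P n = alpha Q n"
  proof
    fix n
    have "fps_nth (egf P) n = fps_nth (egf Q) n" using e by simp
    then have "real (alpha P n) / fact n = real (alpha Q n) / fact n" unfolding egf_def by simp
    then show "alpha P n = alpha Q n" by simp
  qed
next
  assume "\<forall>n. alpha P n = alpha Q n"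
  then show "egf P = egf Q" unfolding egf_def by simp
qed

lemma wrap_eq:
  assumes sp: "sg \<in> perms m" and tp: "tg \<in> perms m" and m1: "m \<ge> 1"
    and e: "egf (consec sg) = egf (consec tg)"
  shows "egf (wrap sg) = egf (wrap tg)"
proof -
  have eq: "\<forall>n. alpha (consec sg) n = alpha (consec tg) n" using e egf_eq_iff by blast
  then have eq': "\<forall>n. alpha (consec tg) n = alpha (consec sg) n" by simp
  have "alpha (wrap sg) n = alpha (wrap tg) n" for n
    using main_le[OF sp tp m1 eq, of n] main_le[OF tp sp m1 eq', of n] unfolding alpha_def by simp
  then show ?thesis using egf_eq_iff by blast
qed



lemma blk2: "blk p [x, y] j \<longleftrightarrow> j + 2 \<le> length p \<and> (p!j < p!(j+1)) = (x < y) \<and> (p!(j+1) < p!j) = (y < x)"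
  unfolding blk_def by (simp add: All_less_Suc numeral_2_eq_2 conj_commute)

lemma rev12: "contains (rev p) (consec [2,1]) \<longleftrightarrow> contains p (consec [1,2])"
proof -
  have "(\<exists>i. blk (rev p) [2,1] i) \<longleftrightarrow> (\<exists>j. blk p [1,2] j)"
  proof
    assume "\<exists>i. blk (rev p) [2,1] i"
    then obtain i where "blk (rev p) [2,1] i" by blast
    then have h: "i + 2 \<le> length p" "rev p ! (i+1) < rev p ! i" unfolding blk2 by auto
    then have "p ! (length p - 2 - i) < p ! (length p - 2 - i + 1)"
      by (simp add: rev_nth numeral_2_eq_2 Suc_diff_Suc)
    then show "\<exists>j. blk p [1,2] j" using h(1) unfolding blk2 by (intro exI[of _ "length p - 2 - i"]) auto
  next
    assume "\<exists>j. blk p [1,2] j"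
    then obtain j where "blk p [1,2] j" by blast
    then have h: "j + 2 \<le> length p" "p ! j < p ! (j+1)" unfolding blk2 by auto
    then have "rev p ! (length p - 2 - j + 1) < rev p ! (length p - 2 - j)"
      by (simp add: rev_nth numeral_2_eq_2 Suc_diff_Suc)
    then show "\<exists>i. blk (rev p) [2,1] i" using h(1) unfolding blk2 by (intro exI[of _ "length p - 2 - j"]) auto
  qed
  then show ?thesis using consec_iff[of "[2,1]"] consec_iff[of "[1,2]"] by simp
qed

lemma egf12: "egf (consec [1,2]) = egf (consec [2,1])"
proof -
  have "alpha (consec [1,2]) n = alpha (consec [2,1]) n" for n
  proof -
    let ?A = "{p \<in> perms n. avoids p (consec [1,2])}"
    let ?B = "{p \<in> perms n. avoids p (consec [2,1])}"
    have im: "rev ` ?A = ?B"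
    proof
      show "rev ` ?A \<subseteq> ?B" using rev12 unfolding perms_def avoids_def by auto
      show "?B \<subseteq> rev ` ?A"
      proof
        fix p assume "p \<in> ?B"
        then have "rev p \<in> ?A" using rev12[of "rev p"] unfolding perms_def avoids_def by auto
        then show "p \<in> rev ` ?A" by (metis image_eqI rev_rev_ident)
      qed
    qed
    have ij: "inj_on rev ?A" by (simp add: inj_on_def)
    have "card ?A = card ?B" using card_image[OF ij] im by simp
    then show ?thesis unfolding alpha_def by simp
  qed
  then show ?thesis using egf_eq_iff by blast
qed

theorem mainTheorem14:
  shows "(\<forall>(k::nat) \<sigma> \<tau>. k \<ge> 3 \<longrightarrow> \<sigma> \<in> perms (k - 2) \<longrightarrow> \<tau> \<in> perms (k - 2) \<longrightarrow>
            egf (consec \<sigma>) = egf (consec \<tau>) \<longrightarrow> egf (wrap \<sigma>) = egf (wrap \<tau>))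
         \<and> egf ([1,2,3,4], [True,False,True]) = egf ([1,3,2,4], [True,False,True])"
proof
  show "\<forall>(k::nat) \<sigma> \<tau>. k \<ge> 3 \<longrightarrow> \<sigma> \<in> perms (k - 2) \<longrightarrow> \<tau> \<in> perms (k - 2) \<longrightarrow>
            egf (consec \<sigma>) = egf (consec \<tau>) \<longrightarrow> egf (wrap \<sigma>) = egf (wrap \<tau>)"
  proof (intro allI impI)
    fix k :: nat and \<sigma> \<tau>
    assume "k \<ge> 3" "\<sigma> \<in> perms (k - 2)" "\<tau> \<in> perms (k - 2)" "egf (consec \<sigma>) = egf (consec \<tau>)"
    then show "egf (wrap \<sigma>) = egf (wrap \<tau>)" using wrap_eq[of \<sigma> "k - 2" \<tau>] by simp
  qed
  have p1: "[1,2] \<in> perms 2" and p2: "[2,1] \<in> perms 2" unfolding perms_def by auto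
  have "egf (wrap [1,2]) = egf (wrap [2,1])" using wrap_eq[OF p1 p2 _ egf12] by simp
  moreover have "wrap [1,2] = ([1,2,3,4], [True,False,True])" "wrap [2,1] = ([1,3,2,4], [True,False,True])"
    unfolding wrap_def by simp_all
  ultimately show "egf ([1,2,3,4], [True,False,True]) = egf ([1,3,2,4], [True,False,True])" by simp
qed

end
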